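(* Let $a$ be a primitive element of $GF(2^m)$, $n\le 2^m-1$, $1\le k\le d\le n-1$, $g(x)=\prod_{j=1}^{n-k}(x-a^j)=\sum_{i=0}^{n-k}g_ix^i$ and $f(x)=\prod_{j=1}^{n-d}(x-a^j)=\sum_{i=0}^{n-d}f_ix^i$. Let $G_k$ be the $k\times n$ matrix whose $r$-th row ($r=1,\dots,k$) is $(0,\dots,0,g_0,\dots,g_{n-k},0,\dots,0)$ with $r-1$ leading zeros, $B$ the $(d-k)\times n$ matrix whose $r$-th row ($r=1,\dots,d-k$) is $(0,\dots,0,f_0,\dots,f_{n-d},0,\dots,0)$ with $r-1$ leading zeros, and $G=\begin{bmatrix}G_k\\ B\end{bmatrix}$. Then $G$ is a least-update-complexity matrix.
   Context: The update complexity of a matrix is the maximum, over its rows, of the number of nonzero entries in the row. Here "least-update-complexity" refers to matrices of the form $\begin{bmatrix}G_k'\\ B'\end{bmatrix}$ that are generator matrices of the $[n,d]$ Reed–Solomon code generated by $f(x)$ and whose first $k$ rows $G_k'$ form a generator matrix of the $[n,k]$ Reed–Solomon code generated by $g(x)$ (the form required for the minimum-bandwidth regenerating code); $G$ has the minimum update complexity among all such matrices. A Reed–Solomon code generated by $h(x)$ is the set of vectors in $GF(2^m)^n$ whose polynomial $\sum_i c_ix^i$ is divisible by $h(x)$. *)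

theory Defs
  imports "HOL-Computational_Algebra.Polynomial"
begin

text \<open>Vectors of length n are functions nat => 'a vanishing at indices >= n.
  A t x n matrix is a function M :: nat => nat => 'a, only entries r < t, j < n matter.\<close>

definition primitive_element :: "'a::field \<Rightarrow> bool" where
  "primitive_element a \<longleftrightarrow> (\<forall>x. x \<noteq> 0 \<longrightarrow> (\<exists>i::nat. x = a ^ i))"

definition rs_gen_poly :: "'a::field \<Rightarrow> nat \<Rightarrow> 'a poly" where
  "rs_gen_poly a t = (\<Prod>j\<in>{1..t}. [:- (a ^ j), 1:])"

definition rs_code :: "nat \<Rightarrow> 'a::field poly \<Rightarrow> (nat \<Rightarrow> 'a) set" where
  "rs_code n h = {c. (\<forall>j\<ge>n. c j = 0) \<and> h dvd (\<Sum>i<n. monom (c i) i)}"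

definition row_space :: "nat \<Rightarrow> nat \<Rightarrow> (nat \<Rightarrow> nat \<Rightarrow> 'a::field) \<Rightarrow> (nat \<Rightarrow> 'a) set" where
  "row_space t n M = {c. (\<forall>j\<ge>n. c j = 0) \<and>
     (\<exists>lam::nat \<Rightarrow> 'a. \<forall>j<n. c j = (\<Sum>r<t. lam r * M r j))}"

definition rows_lin_indep :: "nat \<Rightarrow> nat \<Rightarrow> (nat \<Rightarrow> nat \<Rightarrow> 'a::field) \<Rightarrow> bool" where
  "rows_lin_indep t n M \<longleftrightarrow>
     (\<forall>lam::nat \<Rightarrow> 'a. (\<forall>j<n. (\<Sum>r<t. lam r * M r j) = 0) \<longrightarrow> (\<forall>r<t. lam r = 0))"

definition is_generator_matrix ::
  "nat \<Rightarrow> nat \<Rightarrow> (nat \<Rightarrow> nat \<Rightarrow> 'a::field) \<Rightarrow> (nat \<Rightarrow> 'a) set \<Rightarrow> bool" where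
  "is_generator_matrix t n M C \<longleftrightarrow> rows_lin_indep t n M \<and> row_space t n M = C"

definition row_weight :: "nat \<Rightarrow> (nat \<Rightarrow> nat \<Rightarrow> 'a::zero) \<Rightarrow> nat \<Rightarrow> nat" where
  "row_weight n M r = card {j. j < n \<and> M r j \<noteq> 0}"

definition update_complexity :: "nat \<Rightarrow> nat \<Rightarrow> (nat \<Rightarrow> nat \<Rightarrow> 'a::zero) \<Rightarrow> nat" where
  "update_complexity t n M = Max (row_weight n M ` {..<t})"

definition mbr_admissible ::
  "nat \<Rightarrow> nat \<Rightarrow> nat \<Rightarrow> 'a::field poly \<Rightarrow> 'a poly \<Rightarrow> (nat \<Rightarrow> nat \<Rightarrow> 'a) \<Rightarrow> bool" where
  "mbr_admissible n k d g f M \<longleftrightarrow>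
     is_generator_matrix d n M (rs_code n f) \<and> is_generator_matrix k n M (rs_code n g)"

definition least_update_complexity ::
  "nat \<Rightarrow> nat \<Rightarrow> nat \<Rightarrow> 'a::field poly \<Rightarrow> 'a poly \<Rightarrow> (nat \<Rightarrow> nat \<Rightarrow> 'a) \<Rightarrow> bool" where
  "least_update_complexity n k d g f M \<longleftrightarrow>
     mbr_admissible n k d g f M \<and>
     (\<forall>M'. mbr_admissible n k d g f M' \<longrightarrow> update_complexity d n M \<le> update_complexity d n M')"

definition shift_row :: "'a::zero poly \<Rightarrow> nat \<Rightarrow> nat \<Rightarrow> 'a" where
  "shift_row p r j = (if r \<le> j then coeff p (j - r) else 0)"

text \<open>G = [G_k; B] with rows indexed from 0.\<close>
definition G_matrix :: "nat \<Rightarrow> 'a::zero poly \<Rightarrow> 'a poly \<Rightarrow> nat \<Rightarrow> nat \<Rightarrow> 'a" where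
  "G_matrix k g f r j = (if r < k then shift_row g r j else shift_row f (r - k) j)"

end

theory Submission imports Defs begin


lemma coeff_sum_monoms: "coeff (\<Sum>i<n. monom (c i) i) j = (if j < n then c j else 0)"
  by (simp add: coeff_sum coeff_monom)

lemma deg_lt_of_coeff:
  assumes "\<forall>i\<ge>m. coeff p i = 0"
  shows "p = 0 \<or> degree p < m"
proof (rule ccontr)
  assume "\<not> (p = 0 \<or> degree p < m)"
  hence "p \<noteq> 0" "degree p \<ge> m" by auto
  with assms have "lead_coeff p = 0" by auto
  with \<open>p \<noteq> 0\<close> show False by simp
qed

lemma coeff_eq_0_of_deg:
  assumes "p = 0 \<or> degree p < m" "i \<ge> m"
  shows "coeff p i = 0"
  using assms by (auto intro: coeff_eq_0)

lemma rs_gen_poly_nz: "rs_gen_poly a t \<noteq> (0::'a::field poly)"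
  unfolding rs_gen_poly_def by (simp add: prod_zero_iff)

lemma degree_lin_prod:
  fixes b :: "nat \<Rightarrow> 'a::field"
  assumes "finite A"
  shows "degree (\<Prod>j\<in>A. [:- (b j), 1:]) = card (A::nat set)"
  using assms by (simp add: degree_prod_sum_eq)

lemma rs_gen_poly_degree: "degree (rs_gen_poly (a::'a::field) t) = t"
  unfolding rs_gen_poly_def by (simp add: degree_lin_prod)

lemma rs_gen_poly_root:
  assumes "j \<in> {1..t}"
  shows "poly (rs_gen_poly (a::'a::field) t) (a ^ j) = 0"
  unfolding rs_gen_poly_def poly_prod using assms
  by (subst prod_zero_iff) auto

lemma rs_min_weight:
  fixes a :: "'a::field"
  assumes anz: "a \<noteq> 0" and inj: "inj_on (\<lambda>i. a ^ i) {..<n}"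
    and cc: "c \<in> rs_code n (rs_gen_poly a t)"
    and nz: "j0 < n" "c j0 \<noteq> 0"
  shows "t + 1 \<le> card {j. j < n \<and> c j \<noteq> 0}"
proof (rule ccontr)
  define S where "S = {j. j < n \<and> c j \<noteq> 0}"
  assume "\<not> t + 1 \<le> card {j. j < n \<and> c j \<noteq> 0}"
  hence cardS: "card S \<le> t" unfolding S_def by simp
  have finS: "finite S" unfolding S_def by simp
  have i0S: "j0 \<in> S" using nz unfolding S_def by simp
  define C where "C = (\<Sum>i<n. monom (c i) i)"
  have dvd: "rs_gen_poly a t dvd C" using cc unfolding rs_code_def C_def by simp
  have polyC: "poly C x = (\<Sum>i\<in>S. c i * x ^ i)" for x
  proof -
    have "poly C x = (\<Sum>i<n. c i * x ^ i)" unfolding C_def by (simp add: poly_sum poly_monom)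
    also have "\<dots> = (\<Sum>i\<in>S. c i * x ^ i)"
      by (rule sum.mono_neutral_right) (auto simp: S_def)
    finally show ?thesis .
  qed
  have zero: "(\<Sum>i\<in>S. c i * (a ^ i) ^ s) = 0" if "1 \<le> s" "s \<le> t" for s
  proof -
    have "poly (rs_gen_poly a t) (a ^ s) = 0" using that by (intro rs_gen_poly_root) auto
    hence "poly C (a ^ s) = 0" using dvd by (auto elim!: dvdE)
    hence "(\<Sum>i\<in>S. c i * (a ^ s) ^ i) = 0" by (simp add: polyC)
    thus ?thesis by (simp add: power_mult[symmetric] mult.commute)
  qed
  define Q where "Q = [:0, 1:] * (\<Prod>i\<in>S - {j0}. [:- (a ^ i), 1:])"
  have degQ: "degree Q \<le> t"
  proof -
    have "degree Q \<le> 1 + degree (\<Prod>i\<in>S - {j0}. [:- (a ^ i), 1:])"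
      unfolding Q_def using degree_mult_le[of "[:0,1::'a:]"] by simp
    also have "\<dots> = 1 + card (S - {j0})" using finS by (simp add: degree_lin_prod)
    also have "\<dots> = card S" using i0S finS
      by (simp add: card_Diff_singleton) (metis One_nat_def Suc_pred card_gt_0_iff empty_iff)
    finally show ?thesis using cardS by simp
  qed
  have Q0: "coeff Q 0 = 0" unfolding Q_def by simp
  have polyQ: "poly Q y = (\<Sum>s\<le>t. coeff Q s * y ^ s)" for y
    unfolding poly_altdef
    by (rule sum.mono_neutral_left) (use degQ in \<open>auto intro: coeff_eq_0\<close>)
  have "(\<Sum>i\<in>S. c i * poly Q (a ^ i)) = (\<Sum>i\<in>S. \<Sum>s\<le>t. coeff Q s * (c i * (a ^ i) ^ s))"
    by (simp add: polyQ sum_distrib_left mult_ac)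
  also have "\<dots> = (\<Sum>s\<le>t. coeff Q s * (\<Sum>i\<in>S. c i * (a ^ i) ^ s))"
    by (subst sum.swap) (simp add: sum_distrib_left)
  also have "\<dots> = 0"
  proof (rule sum.neutral, intro ballI)
    fix s assume "s \<in> {..t}"
    thus "coeff Q s * (\<Sum>i\<in>S. c i * (a ^ i) ^ s) = 0"
      using Q0 zero[of s] by (cases "s = 0") auto
  qed
  finally have sum0: "(\<Sum>i\<in>S. c i * poly Q (a ^ i)) = 0" .
  have other: "poly Q (a ^ i) = 0" if "i \<in> S - {j0}" for i
    unfolding Q_def poly_mult poly_prod using that finS
    by (auto simp: prod_zero_iff)
  have "(\<Sum>i\<in>S. c i * poly Q (a ^ i)) = c j0 * poly Q (a ^ j0)"
    by (rule sum.remove[OF finS i0S, THEN trans]) (simp add: other)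
  with sum0 have "c j0 * poly Q (a ^ j0) = 0" by simp
  moreover have "poly Q (a ^ j0) \<noteq> 0"
  proof -
    have "\<forall>i\<in>S - {j0}. a ^ j0 - a ^ i \<noteq> 0"
    proof
      fix i assume i: "i \<in> S - {j0}"
      have "i < n" "j0 < n" using i nz unfolding S_def by auto
      with i inj show "a ^ j0 - a ^ i \<noteq> 0" by (auto simp: inj_on_def)
    qed
    thus ?thesis unfolding Q_def poly_mult poly_prod using finS anz by (simp add: prod_zero_iff)
  qed
  ultimately show False using nz by simp
qed



definition Upol :: "nat \<Rightarrow> (nat \<Rightarrow> 'a::field) \<Rightarrow> 'a poly" where
  "Upol k lam = (\<Sum>r<k. monom (lam r) r)"
definition Vpol :: "nat \<Rightarrow> nat \<Rightarrow> (nat \<Rightarrow> 'a::field) \<Rightarrow> 'a poly" where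
  "Vpol k d lam = (\<Sum>r<d-k. monom (lam (k+r)) r)"

lemma coeff_Upol: "coeff (Upol k lam) i = (if i < k then lam i else 0)"
  unfolding Upol_def by (rule coeff_sum_monoms)
lemma coeff_Vpol: "coeff (Vpol k d lam) i = (if i < d - k then lam (k+i) else 0)"
  unfolding Vpol_def by (rule coeff_sum_monoms)

lemma deg_Upol: "Upol k lam = 0 \<or> degree (Upol k lam) < k"
  by (rule deg_lt_of_coeff) (simp add: coeff_Upol)
lemma deg_Vpol: "Vpol k d lam = 0 \<or> degree (Vpol k d lam) < d - k"
  by (rule deg_lt_of_coeff) (simp add: coeff_Vpol)

lemma deg_mult_bound:
  fixes p q :: "'a::field poly"
  assumes "p = 0 \<or> degree p < a" "degree q \<le> b"
  shows "p * q = 0 \<or> degree (p * q) < a + b"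
  using assms degree_mult_le[of p q] by auto

lemma sum_rows_k:
  "(\<Sum>r<k. lam r * G_matrix k g f r j) = coeff (Upol k lam * g) j"
  unfolding Upol_def sum_distrib_right coeff_sum
  by (rule sum.cong) (auto simp: coeff_monom_mult G_matrix_def shift_row_def)

lemma sum_rows_d:
  assumes "k \<le> d"
  shows "(\<Sum>r<d. lam r * G_matrix k g f r j) = coeff (Upol k lam * g + Vpol k d lam * f) j"
proof -
  have "(\<Sum>r<d. lam r * G_matrix k g f r j) =
        (\<Sum>r\<in>{0..<k}. lam r * G_matrix k g f r j) + (\<Sum>r\<in>{k..<d}. lam r * G_matrix k g f r j)"
    using assms by (simp add: sum.atLeastLessThan_concat lessThan_atLeast0)
  also have "(\<Sum>r\<in>{0..<k}. lam r * G_matrix k g f r j) = coeff (Upol k lam * g) j"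
    by (simp add: sum_rows_k atLeast0LessThan)
  also have "(\<Sum>r\<in>{k..<d}. lam r * G_matrix k g f r j) = (\<Sum>r\<in>{0..<d-k}. lam (r+k) * G_matrix k g f (r+k) j)"
    using sum.shift_bounds_nat_ivl[of "\<lambda>r. lam r * G_matrix k g f r j" 0 k "d-k"] assms by simp
  also have "\<dots> = coeff (Vpol k d lam * f) j"
    unfolding Vpol_def sum_distrib_right coeff_sum lessThan_atLeast0
    by (rule sum.cong) (auto simp: coeff_monom_mult G_matrix_def shift_row_def add.commute)
  finally show ?thesis by simp
qed

lemma poly_of_vec:
  assumes "\<forall>i. c i = coeff P i" "\<forall>i\<ge>n. c i = 0"
  shows "(\<Sum>i<n. monom (c i) i) = P"
  using assms by (intro poly_eqI) (simp add: coeff_sum_monoms)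

context
  fixes f h :: "'a::field poly" and n k d :: nat
  assumes fnz: "f \<noteq> 0" and hnz: "h \<noteq> 0" and df: "degree f = n - d"
    and dh: "degree h = d - k" and k1: "1 \<le> k" and kd: "k \<le> d" and dn: "d < n"
begin

lemma cP_k:
  assumes "n \<le> i" shows "coeff (Upol k lam * (f*h)) i = 0"
proof (cases "Upol k lam = 0")
  case False
  have "degree (f*h) = n - k" using fnz hnz df dh kd dn by (simp add: degree_mult_eq)
  hence "degree (Upol k lam * (f*h)) < n"
    using degree_mult_le[of "Upol k lam" "f*h"] deg_Upol[of k lam] False kd dn by simp
  thus ?thesis using assms by (intro coeff_eq_0) simp
qed simp

lemma cP_d:
  assumes "n \<le> i" shows "coeff (Upol k lam * (f*h) + Vpol k d lam * f) i = 0"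
proof -
  have "coeff (Vpol k d lam * f) i = 0"
  proof (cases "Vpol k d lam = 0")
    case False
    hence "degree (Vpol k d lam * f) < n"
      using degree_mult_le[of "Vpol k d lam" f] deg_Vpol[of k d lam] df kd dn by simp
    thus ?thesis using assms by (intro coeff_eq_0) simp
  qed simp
  thus ?thesis using cP_k[OF assms] by simp
qed

lemma indep_k: "rows_lin_indep k n (G_matrix k (f*h) f)"
  unfolding rows_lin_indep_def
proof (intro allI impI)
  fix lam :: "nat \<Rightarrow> 'a" and r
  assume H: "\<forall>j<n. (\<Sum>r<k. lam r * G_matrix k (f*h) f r j) = 0" and r: "r < k"
  have "\<forall>j. coeff (Upol k lam * (f*h)) j = 0"
  proof
    fix j show "coeff (Upol k lam * (f*h)) j = 0"
      using H[rule_format, of j] cP_k[of j]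
      by (cases "j < n") (auto simp: sum_rows_k)
  qed
  hence "Upol k lam * (f*h) = 0" by (intro poly_eqI) simp
  hence "Upol k lam = 0" using fnz hnz by simp
  hence "coeff (Upol k lam) r = 0" by simp
  thus "lam r = 0" using r by (simp add: coeff_Upol)
qed

lemma indep_d: "rows_lin_indep d n (G_matrix k (f*h) f)"
  unfolding rows_lin_indep_def
proof (intro allI impI)
  fix lam :: "nat \<Rightarrow> 'a" and r
  assume H: "\<forall>j<n. (\<Sum>r<d. lam r * G_matrix k (f*h) f r j) = 0" and r: "r < d"
  let ?U = "Upol k lam" and ?V = "Vpol k d lam"
  have "\<forall>j. coeff (?U * (f*h) + ?V * f) j = 0"
  proof
    fix j show "coeff (?U * (f*h) + ?V * f) j = 0"
      using H[rule_format, of j] cP_d[of j]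
      by (cases "j < n") (auto simp: sum_rows_d[OF kd])
  qed
  hence "?U * (f*h) + ?V * f = 0" by (intro poly_eqI) simp
  hence "f * (?U * h + ?V) = 0" by (simp add: algebra_simps)
  hence UV: "?U * h + ?V = 0" using fnz by simp
  have U0: "?U = 0"
  proof (rule ccontr)
    assume "?U \<noteq> 0"
    hence nz: "?U * h \<noteq> 0" and dg: "degree (?U * h) = degree ?U + (d - k)"
      using hnz dh by (auto simp: degree_mult_eq)
    have "?V = - (?U * h)" using UV by (simp add: eq_neg_iff_add_eq_0 add.commute)
    hence "?V \<noteq> 0" "degree ?V = degree (?U * h)" using nz by auto
    thus False using deg_Vpol[of k d lam] dg by simp
  qed
  hence V0: "?V = 0" using UV by simp
  show "lam r = 0"
  proof (cases "r < k")
    case True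
    have "coeff ?U r = 0" using U0 by simp
    thus ?thesis using True by (simp add: coeff_Upol)
  next
    case False
    have "coeff ?V (r - k) = 0" using V0 by simp
    moreover have "r - k < d - k" "k + (r - k) = r" using False r by auto
    ultimately show ?thesis by (simp add: coeff_Vpol)
  qed
qed

lemma span_k: "row_space k n (G_matrix k (f*h) f) = rs_code n (f*h)"
proof (intro equalityI subsetI)
  fix c assume "c \<in> row_space k n (G_matrix k (f*h) f)"
  then obtain lam where c0: "\<forall>j\<ge>n. c j = 0" and cl: "\<forall>j<n. c j = (\<Sum>r<k. lam r * G_matrix k (f*h) f r j)"
    unfolding row_space_def by auto
  have "\<forall>i. c i = coeff (Upol k lam * (f*h)) i"
  proof
    fix i show "c i = coeff (Upol k lam * (f*h)) i"
      using c0 cl cP_k[of i] by (cases "i < n") (auto simp: sum_rows_k)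
  qed
  hence "(\<Sum>i<n. monom (c i) i) = Upol k lam * (f*h)" using c0 by (intro poly_of_vec) auto
  thus "c \<in> rs_code n (f*h)" using c0 unfolding rs_code_def by auto
next
  fix c assume "c \<in> rs_code n (f*h)"
  hence c0: "\<forall>j\<ge>n. c j = 0" and dv: "f*h dvd (\<Sum>i<n. monom (c i) i)" unfolding rs_code_def by auto
  define C where "C = (\<Sum>i<n. monom (c i) i)"
  have cC: "coeff C i = c i" for i using c0 unfolding C_def by (simp add: coeff_sum_monoms)
  obtain w where w: "C = (f*h) * w" using dv unfolding C_def by (auto elim: dvdE)
  have degC: "C = 0 \<or> degree C < n" by (rule deg_lt_of_coeff) (simp add: cC c0)
  have degw: "w = 0 \<or> degree w < k"
  proof (cases "w = 0")
    case False
    hence "C \<noteq> 0" "degree C = degree f + degree h + degree w" using w fnz hnz by (auto simp: degree_mult_eq)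
    thus ?thesis using degC df dh kd dn by auto
  qed simp
  have Uw: "Upol k (coeff w) = w"
    by (intro poly_eqI) (use degw in \<open>auto simp: coeff_Upol intro: coeff_eq_0\<close>)
  have "\<forall>j<n. c j = (\<Sum>r<k. coeff w r * G_matrix k (f*h) f r j)"
    by (simp add: sum_rows_k Uw cC[symmetric] w mult.commute)
  thus "c \<in> row_space k n (G_matrix k (f*h) f)" unfolding row_space_def using c0 by blast
qed

lemma span_d: "row_space d n (G_matrix k (f*h) f) = rs_code n f"
proof (intro equalityI subsetI)
  fix c assume "c \<in> row_space d n (G_matrix k (f*h) f)"
  then obtain lam where c0: "\<forall>j\<ge>n. c j = 0" and cl: "\<forall>j<n. c j = (\<Sum>r<d. lam r * G_matrix k (f*h) f r j)"
    unfolding row_space_def by auto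
  let ?P = "Upol k lam * (f*h) + Vpol k d lam * f"
  have "\<forall>i. c i = coeff ?P i"
  proof
    fix i show "c i = coeff ?P i"
      using c0 cl cP_d[of i] by (cases "i < n") (auto simp: sum_rows_d[OF kd])
  qed
  hence "(\<Sum>i<n. monom (c i) i) = ?P" using c0 by (intro poly_of_vec) auto
  moreover have "?P = f * (Upol k lam * h + Vpol k d lam)" by (simp add: algebra_simps)
  ultimately show "c \<in> rs_code n f" using c0 unfolding rs_code_def by auto
next
  fix c assume "c \<in> rs_code n f"
  hence c0: "\<forall>j\<ge>n. c j = 0" and dv: "f dvd (\<Sum>i<n. monom (c i) i)" unfolding rs_code_def by auto
  define C where "C = (\<Sum>i<n. monom (c i) i)"
  have cC: "coeff C i = c i" for i using c0 unfolding C_def by (simp add: coeff_sum_monoms)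
  obtain w where w: "C = f * w" using dv unfolding C_def by (auto elim: dvdE)
  have degC: "C = 0 \<or> degree C < n" by (rule deg_lt_of_coeff) (simp add: cC c0)
  define q where "q = w div h"
  define r where "r = w mod h"
  have wqr: "w = q * h + r" unfolding q_def r_def by simp
  have degr: "r = 0 \<or> degree r < d - k" using degree_mod_less[OF hnz, of w] dh unfolding r_def by simp
  have degq: "q = 0 \<or> degree q < k"
  proof (cases "q = 0")
    case False
    hence qh: "q * h \<noteq> 0" "degree (q*h) = degree q + (d - k)" using hnz dh by (auto simp: degree_mult_eq)
    have dw: "degree w = degree q + (d - k)"
    proof (cases "r = 0")
      case True thus ?thesis using wqr qh by simp
    next
      case False
      hence "degree r < degree (q*h)" using degr qh by simp
      thus ?thesis using wqr qh by (simp add: degree_add_eq_left)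
    qed
    have "w \<noteq> 0" using dw wqr qh degr by auto
    hence "C \<noteq> 0" "degree C = degree f + degree w" using w fnz by (auto simp: degree_mult_eq)
    thus ?thesis using degC df dw kd dn by auto
  qed simp
  define lam where "lam i = (if i < k then coeff q i else coeff r (i - k))" for i
  have Uq: "Upol k lam = q"
    by (intro poly_eqI) (use degq in \<open>auto simp: coeff_Upol lam_def intro: coeff_eq_0\<close>)
  have Vr: "Vpol k d lam = r"
    by (intro poly_eqI) (use degr in \<open>auto simp: coeff_Vpol lam_def intro: coeff_eq_0\<close>)
  have "Upol k lam * (f*h) + Vpol k d lam * f = C" unfolding Uq Vr w wqr by (simp add: algebra_simps)
  hence "\<forall>j<n. c j = (\<Sum>r<d. lam r * G_matrix k (f*h) f r j)"
    by (simp add: sum_rows_d[OF kd] cC)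
  thus "c \<in> row_space d n (G_matrix k (f*h) f)" unfolding row_space_def using c0 by blast
qed

lemma G_admissible: "mbr_admissible n k d (f*h) f (G_matrix k (f*h) f)"
  unfolding mbr_admissible_def is_generator_matrix_def
  using indep_k indep_d span_k span_d by simp

end


theorem corollary4:
  fixes a :: "'a::{field,finite}" and m n k d :: nat
  assumes "card (UNIV :: 'a set) = 2 ^ m"
    and "primitive_element a"
    and "n \<le> 2 ^ m - 1"
    and "1 \<le> k" and "k \<le> d" and "d \<le> n - 1"
  shows "least_update_complexity n k d (rs_gen_poly a (n - k)) (rs_gen_poly a (n - d))
           (G_matrix k (rs_gen_poly a (n - k)) (rs_gen_poly a (n - d)))"
proof -
  note card = assms(1) and prim = assms(2) and nm = assms(3) and k1 = assms(4) and kd = assms(5)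
    and dn1 = assms(6)
  have dn: "d < n" and n2: "2 \<le> n" using k1 kd dn1 by auto
  have prim': "\<And>x. x \<noteq> 0 \<Longrightarrow> \<exists>i. x = a ^ i" using prim unfolding primitive_element_def by blast
  have anz: "a \<noteq> 0"
  proof
    assume a0: "a = 0"
    have "UNIV \<subseteq> {0, 1::'a}"
    proof
      fix x :: 'a
      show "x \<in> {0, 1}"
      proof (cases "x = 0")
        case False
        then obtain i where "x = a ^ i" using prim' by blast
        thus ?thesis using a0 by (cases i) auto
      qed simp
    qed
    hence "card (UNIV :: 'a set) \<le> card {0, 1::'a}" by (intro card_mono) auto
    hence "card (UNIV :: 'a set) \<le> 2" by simp
    thus False using card nm n2 by simp
  qed
  have neq: "a ^ i \<noteq> a ^ j" if ij: "i < j" "j < n" for i j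
  proof
    assume eq: "a ^ i = a ^ j"
    define e where "e = j - i"
    have e0: "0 < e" "e < n" using ij unfolding e_def by auto
    have "a ^ j = a ^ i * a ^ e" unfolding e_def using ij by (simp add: power_add[symmetric])
    hence ae: "a ^ e = 1" using eq anz by simp
    have "UNIV - {0} \<subseteq> (\<lambda>l. a ^ l) ` {..<e}"
    proof
      fix x assume "x \<in> (UNIV :: 'a set) - {0}"
      then obtain l where l: "x = a ^ l" using prim' by blast
      have "a ^ l = (a ^ e) ^ (l div e) * a ^ (l mod e)"
        by (metis div_mult_mod_eq power_add power_mult mult.commute)
      hence "x = a ^ (l mod e)" using l ae by simp
      thus "x \<in> (\<lambda>l. a ^ l) ` {..<e}" using e0 by auto
    qed
    hence "card (UNIV - {0::'a}) \<le> card ((\<lambda>l. a ^ l) ` {..<e})" by (intro card_mono) auto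
    also have "\<dots> \<le> e" using card_image_le[of "{..<e}" "\<lambda>l. a ^ l"] by simp
    finally have "card (UNIV :: 'a set) - 1 \<le> e" by (simp add: card_Diff_singleton)
    thus False using card nm e0 by simp
  qed
  have inj: "inj_on (\<lambda>i. a ^ i) {..<n}"
  proof (rule inj_onI)
    fix i j assume "i \<in> {..<n}" "j \<in> {..<n}" "a ^ i = a ^ j"
    thus "i = j" using neq[of i j] neq[of j i] by (cases i j rule: linorder_cases) auto
  qed
  define f where "f = rs_gen_poly a (n - d)"
  define h where "h = (\<Prod>j\<in>{n - d + 1..n - d + (d - k)}. [:- (a ^ j), 1:])"
  define g where "g = rs_gen_poly a (n - k)"
  have gfh: "g = f * h"
  proof -
    have "n - k = (n - d) + (d - k)" using kd dn by simp
    thus ?thesis unfolding g_def f_def h_def rs_gen_poly_def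
      by (simp only:) (rule prod.ub_add_nat, simp)
  qed
  have fnz: "f \<noteq> 0" unfolding f_def by (rule rs_gen_poly_nz)
  have df: "degree f = n - d" unfolding f_def by (rule rs_gen_poly_degree)
  have dh: "degree h = d - k" unfolding h_def by (simp add: degree_lin_prod)
  have hnz: "h \<noteq> 0" unfolding h_def by (simp add: prod_zero_iff)
  have dg: "degree g = n - k" unfolding g_def by (rule rs_gen_poly_degree)
  have adm: "mbr_admissible n k d g f (G_matrix k g f)"
    unfolding gfh by (rule G_admissible[OF fnz hnz df dh k1 kd dn])
  have upper: "update_complexity d n (G_matrix k g f) \<le> n - k + 1"
    unfolding update_complexity_def
  proof (rule Max.boundedI)
    show "finite (row_weight n (G_matrix k g f) ` {..<d})" by simp
    show "row_weight n (G_matrix k g f) ` {..<d} \<noteq> {}" using k1 kd by (auto simp: lessThan_empty_iff)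
  next
    fix w assume "w \<in> row_weight n (G_matrix k g f) ` {..<d}"
    then obtain r where r: "r < d" and w: "w = row_weight n (G_matrix k g f) r" by auto
    show "w \<le> n - k + 1"
    proof (cases "r < k")
      case True
      have "{j. j < n \<and> G_matrix k g f r j \<noteq> 0} \<subseteq> {r..r + (n - k)}"
      proof
        fix j assume "j \<in> {j. j < n \<and> G_matrix k g f r j \<noteq> 0}"
        hence "r \<le> j" "coeff g (j - r) \<noteq> 0" using True by (auto simp: G_matrix_def shift_row_def split: if_splits)
        hence "j - r \<le> n - k" using dg le_degree by metis
        thus "j \<in> {r..r + (n - k)}" using \<open>r \<le> j\<close> by simp
      qed
      hence "w \<le> card {r..r + (n - k)}" unfolding w row_weight_def by (intro card_mono) auto
      thus ?thesis by simp
    next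
      case False
      have "{j. j < n \<and> G_matrix k g f r j \<noteq> 0} \<subseteq> {r - k..r - k + (n - d)}"
      proof
        fix j assume "j \<in> {j. j < n \<and> G_matrix k g f r j \<noteq> 0}"
        hence "r - k \<le> j" "coeff f (j - (r - k)) \<noteq> 0" using False by (auto simp: G_matrix_def shift_row_def split: if_splits)
        hence "j - (r - k) \<le> n - d" using df le_degree by metis
        thus "j \<in> {r - k..r - k + (n - d)}" using \<open>r - k \<le> j\<close> by simp
      qed
      hence "w \<le> card {r - k..r - k + (n - d)}" unfolding w row_weight_def by (intro card_mono) auto
      thus ?thesis using kd by simp
    qed
  qed
  have lower: "n - k + 1 \<le> update_complexity d n M'" if adm': "mbr_admissible n k d g f M'" for M'
  proof -
    have ind: "rows_lin_indep k n M'" and sp: "row_space k n M' = rs_code n g"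
      using adm' unfolding mbr_admissible_def is_generator_matrix_def by auto
    define lam :: "nat \<Rightarrow> 'a" where "lam r = (if r = 0 then 1 else 0)" for r
    have s: "(\<Sum>r<k. lam r * M' r j) = M' 0 j" for j
    proof -
      have "(\<Sum>r<k. lam r * M' r j) = (\<Sum>r<k. if r = 0 then M' r j else 0)"
        unfolding lam_def by (rule sum.cong) auto
      also have "\<dots> = M' 0 j" using k1 by (simp add: sum.delta)
      finally show ?thesis .
    qed
    obtain j0 where j0: "j0 < n" "M' 0 j0 \<noteq> 0"
    proof (rule ccontr)
      assume "\<not> thesis"
      hence "\<forall>j<n. M' 0 j = 0" using that by blast
      hence "\<forall>j<n. (\<Sum>r<k. lam r * M' r j) = 0" by (simp add: s)
      hence "lam 0 = 0" using ind k1 unfolding rows_lin_indep_def by auto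
      thus False unfolding lam_def by simp
    qed
    define c where "c j = (if j < n then M' 0 j else 0)" for j
    have "c \<in> row_space k n M'" unfolding row_space_def c_def by (auto intro!: exI[of _ lam] simp: s)
    hence "c \<in> rs_code n (rs_gen_poly a (n - k))" using sp unfolding g_def by simp
    from rs_min_weight[OF anz inj this, of j0] j0
    have "n - k + 1 \<le> card {j. j < n \<and> c j \<noteq> 0}" by (simp add: c_def)
    also have "{j. j < n \<and> c j \<noteq> 0} = {j. j < n \<and> M' 0 j \<noteq> 0}" by (auto simp: c_def)
    also have "card \<dots> = row_weight n M' 0" by (simp add: row_weight_def)
    also have "\<dots> \<le> update_complexity d n M'" unfolding update_complexity_def
      using k1 kd by (intro Max_ge) auto
    finally show ?thesis .
  qed
  have "least_update_complexity n k d g f (G_matrix k g f)"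
    unfolding least_update_complexity_def using adm upper lower by (meson le_trans)
  thus ?thesis unfolding g_def f_def .
qed

end
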